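(* Let $k$ be an algebraically closed field of characteristic zero, $n\ge1$, $q\in k$ a primitive $2n$-th root of unity, $a\in k\setminus\{0\}$, and let $\mathfrak wH_{4n}$ be the algebra generated by $Z,X$ with $Z^{2n+1}=Z$, $ZX=qXZ$, $X^2=0$. For $i\in\mathbb Z_{2n}$ let $S_i$ be the $1$-dimensional module with $X$ acting by $0$ and $Z$ by $q^i$; let $M_i$ be the $2$-dimensional module with basis $v_1^i,v_2^i$, $Xv_1^i=v_2^i$, $Xv_2^i=0$, $Zv_1^i=q^iv_1^i$, $Zv_2^i=q^{i+1}v_2^i$. Let $N_0$ be the $1$-dimensional module on which $Z$ and $X$ act by $0$, and $N_1$ the $2$-dimensional module with basis $w_1,w_2$, $Xw_1=w_2$, $Xw_2=0$, $Zw_1=Zw_2=0$. Then $\{S_i,M_i\mid i\in\mathbb Z_{2n}\}\cup\{N_0,N_1\}$ is a complete list of pairwise non-isomorphic finite-dimensional indecomposable $\mathfrak wH_{4n}$-modules. *)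

theory Defs
  imports "Jordan_Normal_Form.Matrix" "HOL-Computational_Algebra.Polynomial"
begin

definition alg_closed :: "'k::field itself \<Rightarrow> bool" where
  "alg_closed _ \<longleftrightarrow> (\<forall>p :: 'k poly. degree p \<ge> 1 \<longrightarrow> (\<exists>x. poly p x = 0))"

definition primitive_root :: "nat \<Rightarrow> 'k::field \<Rightarrow> bool" where
  "primitive_root m q \<longleftrightarrow> q ^ m = 1 \<and> (\<forall>j. 0 < j \<and> j < m \<longrightarrow> q ^ j \<noteq> 1)"

text \<open>A d-dimensional wH_{4n}-module, given in a basis: the matrices of Z and X
  acting on column vectors in k^d, satisfying Z^(2n+1) = Z, ZX = qXZ, X^2 = 0.\<close>
type_synonym 'k rep = "nat \<times> 'k mat \<times> 'k mat"

definition is_wH_mod :: "nat \<Rightarrow> 'k::field \<Rightarrow> 'k rep \<Rightarrow> bool" where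
  "is_wH_mod n q M \<longleftrightarrow> (case M of (d, Z, X) \<Rightarrow>
     Z \<in> carrier_mat d d \<and> X \<in> carrier_mat d d \<and>
     Z ^\<^sub>m (2*n+1) = Z \<and> Z * X = q \<cdot>\<^sub>m (X * Z) \<and> X * X = 0\<^sub>m d d)"

definition submod :: "'k::field rep \<Rightarrow> 'k vec set \<Rightarrow> bool" where
  "submod M U \<longleftrightarrow> (case M of (d, Z, X) \<Rightarrow>
     U \<subseteq> carrier_vec d \<and> 0\<^sub>v d \<in> U \<and>
     (\<forall>u\<in>U. \<forall>v\<in>U. u + v \<in> U) \<and> (\<forall>c. \<forall>u\<in>U. c \<cdot>\<^sub>v u \<in> U) \<and>
     (\<forall>u\<in>U. Z *\<^sub>v u \<in> U) \<and> (\<forall>u\<in>U. X *\<^sub>v u \<in> U))"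

definition indecomposable :: "'k::field rep \<Rightarrow> bool" where
  "indecomposable M \<longleftrightarrow> fst M > 0 \<and>
     \<not> (\<exists>U W. submod M U \<and> submod M W \<and> U \<noteq> {0\<^sub>v (fst M)} \<and> W \<noteq> {0\<^sub>v (fst M)} \<and>
           U \<inter> W = {0\<^sub>v (fst M)} \<and>
           (\<forall>v\<in>carrier_vec (fst M). \<exists>u\<in>U. \<exists>w\<in>W. v = u + w))"

definition mod_iso :: "'k::field rep \<Rightarrow> 'k rep \<Rightarrow> bool" where
  "mod_iso M N \<longleftrightarrow> (case M of (d, Z, X) \<Rightarrow> case N of (d', Z', X') \<Rightarrow>
     d = d' \<and> (\<exists>P \<in> carrier_mat d d. invertible_mat P \<and> P * Z = Z' * P \<and> P * X = X' * P))"

datatype idx = S nat | M nat | N0 | N1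

definition valid_idx :: "nat \<Rightarrow> idx \<Rightarrow> bool" where
  "valid_idx n j \<longleftrightarrow> (case j of S i \<Rightarrow> i < 2*n | M i \<Rightarrow> i < 2*n | _ \<Rightarrow> True)"

definition std_mod :: "'k::field \<Rightarrow> idx \<Rightarrow> 'k rep" where
  "std_mod q j = (case j of
     S i \<Rightarrow> (1, mat 1 1 (\<lambda>_. q ^ i), 0\<^sub>m 1 1)
   | M i \<Rightarrow> (2, mat 2 2 (\<lambda>(r,c). if r = c then q ^ (i + r) else 0),
                mat 2 2 (\<lambda>(r,c). if r = 1 \<and> c = 0 then 1 else 0))
   | N0 \<Rightarrow> (1, 0\<^sub>m 1 1, 0\<^sub>m 1 1)
   | N1 \<Rightarrow> (2, 0\<^sub>m 2 2, mat 2 2 (\<lambda>(r,c). if r = 1 \<and> c = 0 then 1 else 0)))"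

end

theory Submission imports Defs begin

lemma mult_unit_col: "(A::'a::semiring_1 mat) \<in> carrier_mat nr nc \<Longrightarrow> j < nc \<Longrightarrow> A *\<^sub>v unit_vec nc j = col A j"
  by (intro eq_vecI) (auto simp: scalar_prod_def unit_vec_def if_distrib[of "\<lambda>x. _ * x"] cong: if_cong)

lemma mat_eq_on_vec:
  fixes A B :: "'a::semiring_1 mat"
  assumes "A \<in> carrier_mat nr nc" "B \<in> carrier_mat nr nc"
    and "\<And>v. v \<in> carrier_vec nc \<Longrightarrow> A *\<^sub>v v = B *\<^sub>v v"
  shows "A = B"
proof (rule mat_col_eqI)
  fix j assume "j < dim_col B"
  then have j: "j < nc" using assms by auto
  have "col A j = A *\<^sub>v unit_vec nc j" using mult_unit_col[OF assms(1) j] by simp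
  also have "\<dots> = B *\<^sub>v unit_vec nc j" using assms(3) by simp
  also have "\<dots> = col B j" using mult_unit_col[OF assms(2) j] by simp
  finally show "col A j = col B j" .
qed (use assms in auto)

lemma trace_comm:
  fixes A B :: "'a::comm_ring_1 mat"
  assumes "A \<in> carrier_mat n m" "B \<in> carrier_mat m n"
  shows "(\<Sum>i<n. (A*B)$$(i,i)) = (\<Sum>j<m. (B*A)$$(j,j))"
proof -
  have "(\<Sum>i<n. (A*B)$$(i,i)) = (\<Sum>i<n. \<Sum>k<m. A$$(i,k) * B$$(k,i))"
    using assms by (auto simp: scalar_prod_def atLeast0LessThan intro!: sum.cong)
  also have "\<dots> = (\<Sum>k<m. \<Sum>i<n. B$$(k,i) * A$$(i,k))"
    by (subst sum.swap) (simp add: mult.commute)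
  also have "\<dots> = (\<Sum>j<m. (B*A)$$(j,j))"
    using assms by (auto simp: scalar_prod_def atLeast0LessThan intro!: sum.cong)
  finally show ?thesis .
qed

lemma trace_one: "(\<Sum>i<n. (1\<^sub>m n :: 'a::comm_ring_1 mat)$$(i,i)) = of_nat n"
  by simp

lemma idem_trivial:
  fixes Z X E :: "'k::field mat"
  assumes ind: "indecomposable (d,Z,X)" and Zc: "Z \<in> carrier_mat d d" and Xc: "X \<in> carrier_mat d d"
    and Ec: "E \<in> carrier_mat d d" and EE: "E * E = E" and EZ: "E * Z = Z * E" and EX: "E * X = X * E"
  shows "E = 0\<^sub>m d d \<or> E = 1\<^sub>m d"
proof -
  define U where "U = {u \<in> carrier_vec d. E *\<^sub>v u = u}"
  define W where "W = {w \<in> carrier_vec d. E *\<^sub>v w = 0\<^sub>v d}"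
  have EEv: "E *\<^sub>v (E *\<^sub>v v) = E *\<^sub>v v" if "v \<in> carrier_vec d" for v
    using that Ec EE by (metis assoc_mult_mat_vec)
  have EZv: "E *\<^sub>v (Z *\<^sub>v v) = Z *\<^sub>v (E *\<^sub>v v)" if "v \<in> carrier_vec d" for v
    using that Ec Zc EZ by (metis assoc_mult_mat_vec)
  have EXv: "E *\<^sub>v (X *\<^sub>v v) = X *\<^sub>v (E *\<^sub>v v)" if "v \<in> carrier_vec d" for v
    using that Ec Xc EX by (metis assoc_mult_mat_vec)
  have sU: "submod (d,Z,X) U"
    unfolding submod_def U_def using Ec Zc Xc
    by (auto simp: mult_add_distrib_mat_vec mult_mat_vec EZv EXv)
  have sW: "submod (d,Z,X) W"
    unfolding submod_def W_def using Ec Zc Xc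
    by (auto simp: mult_add_distrib_mat_vec mult_mat_vec EZv EXv)
  have UW: "U \<inter> W = {0\<^sub>v d}"
    unfolding U_def W_def using Ec by auto
  have dec: "\<forall>v\<in>carrier_vec (fst (d,Z,X)). \<exists>u\<in>U. \<exists>w\<in>W. v = u + w"
  proof
    fix v :: "'k vec" assume v: "v \<in> carrier_vec (fst (d,Z,X))"
    then have v: "v \<in> carrier_vec d" by simp
    have "E *\<^sub>v v \<in> U" unfolding U_def using v Ec EEv by auto
    moreover have "v - E *\<^sub>v v \<in> W" unfolding W_def using v Ec EEv
      by (auto simp: mult_minus_distrib_mat_vec)
    moreover have "v = E *\<^sub>v v + (v - E *\<^sub>v v)"
      using v Ec by (intro eq_vecI) auto
    ultimately show "\<exists>u\<in>U. \<exists>w\<in>W. v = u + w" by blast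
  qed
  from ind have "\<not> (submod (d,Z,X) U \<and> submod (d,Z,X) W \<and> U \<noteq> {0\<^sub>v d} \<and> W \<noteq> {0\<^sub>v d} \<and>
           U \<inter> W = {0\<^sub>v d} \<and> (\<forall>v\<in>carrier_vec (fst (d,Z,X)). \<exists>u\<in>U. \<exists>w\<in>W. v = u + w))"
    unfolding indecomposable_def fst_conv by blast
  with sU sW UW dec have "U = {0\<^sub>v d} \<or> W = {0\<^sub>v d}" by blast
  then show ?thesis
  proof
    assume U0: "U = {0\<^sub>v d}"
    have "E = 0\<^sub>m d d"
    proof (rule mat_eq_on_vec[OF Ec])
      fix v :: "'k vec" assume v: "v \<in> carrier_vec d"
      have "E *\<^sub>v v \<in> U" unfolding U_def using v Ec EEv by auto
      then show "E *\<^sub>v v = 0\<^sub>m d d *\<^sub>v v" using U0 v by auto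
    qed auto
    then show ?thesis by simp
  next
    assume W0: "W = {0\<^sub>v d}"
    have "E = 1\<^sub>m d"
    proof (rule mat_eq_on_vec[OF Ec])
      fix v :: "'k vec" assume v: "v \<in> carrier_vec d"
      have "v - E *\<^sub>v v \<in> W" unfolding W_def using v Ec EEv
        by (auto simp: mult_minus_distrib_mat_vec)
      then have "v - E *\<^sub>v v = 0\<^sub>v d" using W0 by auto
      then have "E *\<^sub>v v = v"
        using v Ec by (metis (no_types, lifting) carrier_vecD dim_mult_mat_vec carrier_matD(1)
            index_minus_vec(1) index_zero_vec(1) eq_vecI right_minus_eq)
      then show "E *\<^sub>v v = 1\<^sub>m d *\<^sub>v v" using v by auto
    qed auto
    then show ?thesis by simp
  qed
qed


lemma key_summand:
  fixes Z X P Q Z' X' :: "'k::field_char_0 mat"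
  assumes ind: "indecomposable (d,Z,X)" and Zc: "Z \<in> carrier_mat d d" and Xc: "X \<in> carrier_mat d d"
    and Pc: "P \<in> carrier_mat m d" and Qc: "Q \<in> carrier_mat d m"
    and Z'c: "Z' \<in> carrier_mat m m" and X'c: "X' \<in> carrier_mat m m"
    and m: "m > 0" and PQ: "P * Q = 1\<^sub>m m"
    and PZ: "P * Z = Z' * P" and PX: "P * X = X' * P"
    and ZQ: "Z * Q = Q * Z'" and XQ: "X * Q = Q * X'"
  shows "mod_iso (d,Z,X) (m,Z',X')"
proof -
  define E where "E = Q * P"
  have Ec: "E \<in> carrier_mat d d" unfolding E_def using Pc Qc by auto
  have "E * E = Q * (P * (Q * P))" unfolding E_def
    by (rule assoc_mult_mat[OF Qc Pc mult_carrier_mat[OF Qc Pc]])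
  also have "\<dots> = Q * ((P * Q) * P)" using assoc_mult_mat[OF Pc Qc Pc] by simp
  also have "\<dots> = E" unfolding E_def PQ using Pc by (metis left_mult_one_mat)
  finally have EE: "E * E = E" .
  have EZ: "E * Z = Z * E"
  proof -
    have "E * Z = Q * (P * Z)" unfolding E_def by (rule assoc_mult_mat[OF Qc Pc Zc])
    also have "\<dots> = (Q * Z') * P" unfolding PZ by (rule assoc_mult_mat[OF Qc Z'c Pc, symmetric])
    also have "\<dots> = Z * E" unfolding E_def ZQ[symmetric] by (rule assoc_mult_mat[OF Zc Qc Pc])
    finally show ?thesis .
  qed
  have EX: "E * X = X * E"
  proof -
    have "E * X = Q * (P * X)" unfolding E_def by (rule assoc_mult_mat[OF Qc Pc Xc])
    also have "\<dots> = (Q * X') * P" unfolding PX by (rule assoc_mult_mat[OF Qc X'c Pc, symmetric])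
    also have "\<dots> = X * E" unfolding E_def XQ[symmetric] by (rule assoc_mult_mat[OF Xc Qc Pc])
    finally show ?thesis .
  qed
  have "E \<noteq> 0\<^sub>m d d"
  proof
    assume E0: "E = 0\<^sub>m d d"
    have "(P * E) * Q = ((P * Q) * P) * Q" unfolding E_def using assoc_mult_mat[OF Pc Qc Pc] by simp
    also have "\<dots> = (P * Q) * (P * Q)" by (rule assoc_mult_mat[OF mult_carrier_mat[OF Pc Qc] Pc Qc])
    also have "\<dots> = 1\<^sub>m m" unfolding PQ by simp
    finally have "1\<^sub>m m = (P * E) * Q" by simp
    also have "\<dots> = 0\<^sub>m m m" unfolding E0 using Pc Qc by simp
    finally have "(1\<^sub>m m :: 'k mat) $$ (0,0) = 0\<^sub>m m m $$ (0,0)" by simp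
    with m show False by simp
  qed
  with idem_trivial[OF ind Zc Xc Ec EE EZ EX] have E1: "Q * P = 1\<^sub>m d" unfolding E_def by simp
  have "(of_nat d :: 'k) = (\<Sum>i<d. (Q*P)$$(i,i))" unfolding E1 by simp
  also have "\<dots> = (\<Sum>j<m. (P*Q)$$(j,j))" using trace_comm[OF Qc Pc] .
  also have "\<dots> = of_nat m" unfolding PQ by simp
  finally have dm: "d = m" by simp
  have Pd: "P \<in> carrier_mat d d" using Pc dm by simp
  have "square_mat P" using Pd by (simp add: square_mat.simps)
  moreover have "inverts_mat P Q" unfolding inverts_mat_def using Pc PQ by simp
  moreover have "inverts_mat Q P" unfolding inverts_mat_def using Qc E1 by simp
  ultimately have "invertible_mat P" unfolding invertible_mat_def by blast
  then show ?thesis unfolding mod_iso_def using dm Pc PZ PX by auto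
qed


lemma rowvec_col:
  fixes Z :: "'a::comm_semiring_0 mat"
  assumes "\<psi> \<in> carrier_vec d" "Z \<in> carrier_mat d d" "j < d"
  shows "\<psi> \<bullet> col Z j = (transpose_mat Z *\<^sub>v \<psi>) $ j"
  using assms by (simp add: comm_scalar_prod[of _ d])

lemma mat_row_vec:
  fixes Z :: "'a::comm_semiring_0 mat"
  assumes "Z \<in> carrier_mat d d" "i < d"
  shows "row Z i \<bullet> v = (Z *\<^sub>v v) $ i"
  using assms by simp

lemma summand1:
  fixes Z X :: "'k::field_char_0 mat"
  assumes ind: "indecomposable (d,Z,X)" and Zc: "Z \<in> carrier_mat d d" and Xc: "X \<in> carrier_mat d d"
    and v: "v \<in> carrier_vec d" and \<psi>: "\<psi> \<in> carrier_vec d"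
    and Zv: "Z *\<^sub>v v = c \<cdot>\<^sub>v v" and Z\<psi>: "transpose_mat Z *\<^sub>v \<psi> = c \<cdot>\<^sub>v \<psi>"
    and Xv: "X *\<^sub>v v = 0\<^sub>v d" and X\<psi>: "transpose_mat X *\<^sub>v \<psi> = 0\<^sub>v d"
    and \<psi>v: "\<psi> \<bullet> v = 1"
  shows "mod_iso (d,Z,X) (1, mat 1 1 (\<lambda>_. c), 0\<^sub>m 1 1)"
proof (rule key_summand[OF ind Zc Xc])
  let ?P = "mat_of_rows d [\<psi>]" and ?Q = "mat_of_cols d [v]"
  show Pc: "?P \<in> carrier_mat 1 d" by (metis mat_of_rows_carrier(1) length_Cons list.size(3) One_nat_def)
  show Qc: "?Q \<in> carrier_mat d 1" by (metis mat_of_cols_carrier(1) length_Cons list.size(3) One_nat_def)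
  show "mat 1 1 (\<lambda>_. c) \<in> carrier_mat 1 1" by simp
  show "0\<^sub>m 1 1 \<in> carrier_mat 1 1" by simp
  show "(0::nat) < 1" by simp
  show "?P * ?Q = 1\<^sub>m 1"
    by (rule eq_matI) (use v \<psi> \<psi>v in auto)
  show "?P * Z = mat 1 1 (\<lambda>_. c) * ?P"
  proof (rule eq_matI)
    fix i j assume "i < dim_row (mat 1 1 (\<lambda>_. c) * ?P)" "j < dim_col (mat 1 1 (\<lambda>_. c) * ?P)"
    then have ij: "i = 0" "j < d" by auto
    have "(?P * Z) $$ (i,j) = \<psi> \<bullet> col Z j" using ij Zc \<psi> by simp
    also have "\<dots> = c * \<psi> $ j" using rowvec_col[OF \<psi> Zc ij(2)] Z\<psi> ij \<psi> by simp
    also have "\<dots> = (mat 1 1 (\<lambda>_. c) * ?P) $$ (i,j)" using ij \<psi>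
      by (simp add: scalar_prod_def mat_of_rows_index)
    finally show "(?P * Z) $$ (i,j) = (mat 1 1 (\<lambda>_. c) * ?P) $$ (i,j)" .
  qed (use Zc in auto)
  show "?P * X = 0\<^sub>m 1 1 * ?P"
  proof (rule eq_matI)
    fix i j assume "i < dim_row (0\<^sub>m 1 1 * ?P)" "j < dim_col (0\<^sub>m 1 1 * ?P)"
    then have ij: "i = 0" "j < d" by auto
    have "(?P * X) $$ (i,j) = \<psi> \<bullet> col X j" using ij Xc \<psi> by simp
    also have "\<dots> = 0" using rowvec_col[OF \<psi> Xc ij(2)] X\<psi> ij \<psi> by simp
    finally show "(?P * X) $$ (i,j) = (0\<^sub>m 1 1 * ?P) $$ (i,j)" using ij by simp
  qed (use Xc in auto)
  show "Z * ?Q = ?Q * mat 1 1 (\<lambda>_. c)"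
  proof (rule eq_matI)
    fix i j assume "i < dim_row (?Q * mat 1 1 (\<lambda>_. c))" "j < dim_col (?Q * mat 1 1 (\<lambda>_. c))"
    then have ij: "j = 0" "i < d" by auto
    have "(Z * ?Q) $$ (i,j) = row Z i \<bullet> v" using ij Zc v by simp
    also have "\<dots> = c * v $ i" using mat_row_vec[OF Zc ij(2)] Zv ij v by simp
    also have "\<dots> = (?Q * mat 1 1 (\<lambda>_. c)) $$ (i,j)" using ij v
      by (simp add: scalar_prod_def mat_of_cols_index)
    finally show "(Z * ?Q) $$ (i,j) = (?Q * mat 1 1 (\<lambda>_. c)) $$ (i,j)" .
  qed (use Zc in auto)
  show "X * ?Q = ?Q * 0\<^sub>m 1 1"
  proof (rule eq_matI)
    fix i j assume "i < dim_row (?Q * 0\<^sub>m 1 1)" "j < dim_col (?Q * 0\<^sub>m 1 1)"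
    then have ij: "j = 0" "i < d" by auto
    have "(X * ?Q) $$ (i,j) = row X i \<bullet> v" using ij Xc v by simp
    also have "\<dots> = 0" using mat_row_vec[OF Xc ij(2)] Xv ij v by simp
    finally show "(X * ?Q) $$ (i,j) = (?Q * 0\<^sub>m 1 1) $$ (i,j)" using ij by simp
  qed (use Xc in auto)
qed


lemma sum2: "(\<Sum>k\<in>{0..<2::nat}. f k) = f 0 + f 1"
  by (simp add: numeral_2_eq_2)

lemma smult_mat_vec:
  fixes A :: "'a::comm_ring mat"
  assumes "A \<in> carrier_mat nr nc" "w \<in> carrier_vec nc"
  shows "(a \<cdot>\<^sub>m A) *\<^sub>v w = a \<cdot>\<^sub>v (A *\<^sub>v w)"
  using assms by (intro eq_vecI) auto

lemma zero_mat_mult_vec: "w \<in> carrier_vec nc \<Longrightarrow> (0\<^sub>m nr nc :: 'a::semiring_0 mat) *\<^sub>v w = 0\<^sub>v nr"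
  by (intro eq_vecI) (auto simp: scalar_prod_def)

definition Zmat2 :: "'k::field \<Rightarrow> 'k \<Rightarrow> 'k mat" where
  "Zmat2 q c = mat 2 2 (\<lambda>(r,s). if r = s then (if r = 0 then c else q*c) else 0)"

definition Xmat2 :: "'k::field mat" where
  "Xmat2 = mat 2 2 (\<lambda>(r,s). if r = 1 \<and> s = 0 then 1 else 0)"

lemma summand2:
  fixes Z X :: "'k::field_char_0 mat"
  assumes ind: "indecomposable (d,Z,X)" and Zc: "Z \<in> carrier_mat d d" and Xc: "X \<in> carrier_mat d d"
    and q0: "q \<noteq> 0" and ZX: "Z * X = q \<cdot>\<^sub>m (X * Z)" and XX: "X * X = 0\<^sub>m d d"
    and v: "v \<in> carrier_vec d" and \<psi>: "\<psi> \<in> carrier_vec d"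
    and Zv: "Z *\<^sub>v v = c \<cdot>\<^sub>v v" and Z\<psi>: "transpose_mat Z *\<^sub>v \<psi> = (q*c) \<cdot>\<^sub>v \<psi>"
    and \<psi>Xv: "\<psi> \<bullet> (X *\<^sub>v v) = 1" and \<psi>v: "\<psi> \<bullet> v = 0"
  shows "mod_iso (d,Z,X) (2, Zmat2 q c, Xmat2)"
proof -
  define \<phi> where "\<phi> = transpose_mat X *\<^sub>v \<psi>"
  define u where "u = X *\<^sub>v v"
  have \<phi>c: "\<phi> \<in> carrier_vec d" unfolding \<phi>_def using Xc \<psi> by simp
  have uc: "u \<in> carrier_vec d" unfolding u_def using Xc v by simp
  have \<phi>w: "\<phi> \<bullet> w = \<psi> \<bullet> (X *\<^sub>v w)" if "w \<in> carrier_vec d" for w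
    unfolding \<phi>_def by (rule transpose_vec_mult_scalar[OF Xc that \<psi>])
  have \<psi>Z: "\<psi> \<bullet> (Z *\<^sub>v w) = (q*c) * (\<psi> \<bullet> w)" if "w \<in> carrier_vec d" for w
    using transpose_vec_mult_scalar[OF Zc that \<psi>] Z\<psi> that \<psi> by simp
  have XXw: "X *\<^sub>v (X *\<^sub>v w) = 0\<^sub>v d" if "w \<in> carrier_vec d" for w
    using assoc_mult_mat_vec[OF Xc Xc that, symmetric] XX that zero_mat_mult_vec by simp
  have Zu: "Z *\<^sub>v u = (q*c) \<cdot>\<^sub>v u"
  proof -
    have "Z *\<^sub>v u = (Z * X) *\<^sub>v v" unfolding u_def using Zc Xc v by simp
    also have "\<dots> = q \<cdot>\<^sub>v (X *\<^sub>v (Z *\<^sub>v v))" unfolding ZX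
      using smult_mat_vec[of "X*Z" d d v q] Xc Zc v by simp
    also have "\<dots> = (q*c) \<cdot>\<^sub>v u" unfolding Zv u_def using Xc v
      by (simp add: mult_mat_vec smult_smult_assoc)
    finally show ?thesis .
  qed
  have \<phi>Z: "\<phi> \<bullet> (Z *\<^sub>v w) = c * (\<phi> \<bullet> w)" if w: "w \<in> carrier_vec d" for w
  proof -
    have "q * (\<phi> \<bullet> (Z *\<^sub>v w)) = q * (\<psi> \<bullet> ((X * Z) *\<^sub>v w))"
      using \<phi>w[of "Z *\<^sub>v w"] Zc Xc w by simp
    also have "\<dots> = \<psi> \<bullet> ((q \<cdot>\<^sub>m (X * Z)) *\<^sub>v w)"
      using smult_mat_vec[of "X*Z" d d w q] Xc Zc w \<psi> by simp
    also have "\<dots> = \<psi> \<bullet> (Z *\<^sub>v (X *\<^sub>v w))" unfolding ZX[symmetric] using Zc Xc w by simp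
    also have "\<dots> = (q*c) * (\<psi> \<bullet> (X *\<^sub>v w))" using \<psi>Z[of "X *\<^sub>v w"] Xc w by simp
    also have "\<dots> = q * (c * (\<phi> \<bullet> w))" using \<phi>w[OF w] by simp
    finally show ?thesis using q0 by simp
  qed
  let ?P = "mat_of_rows d [\<phi>, \<psi>]" and ?Q = "mat_of_cols d [v, u]"
  have Pc: "?P \<in> carrier_mat 2 d" using mat_of_rows_carrier(1)[of d "[\<phi>, \<psi>]"] by (simp add: numeral_2_eq_2)
  have Qc: "?Q \<in> carrier_mat d 2" using mat_of_cols_carrier(1)[of d "[v, u]"] by (simp add: numeral_2_eq_2)
  have Pr: "row ?P i = [\<phi>, \<psi>] ! i" if "i < 2" for i
    using that \<phi>c \<psi> by (intro mat_of_rows_row) (auto simp: less_2_cases_iff nth_Cons')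
  have Qcol: "col ?Q i = [v, u] ! i" if "i < 2" for i
    using that v uc by (intro col_mat_of_cols) (auto simp: less_2_cases_iff nth_Cons')
  show ?thesis
  proof (rule key_summand[OF ind Zc Xc Pc Qc])
    show "Zmat2 q c \<in> carrier_mat 2 2" "Xmat2 \<in> carrier_mat 2 2" "(0::nat) < 2"
      unfolding Zmat2_def Xmat2_def by auto
    show "?P * ?Q = 1\<^sub>m 2"
    proof (rule eq_matI)
      fix i j assume "i < dim_row (1\<^sub>m 2 :: 'k mat)" "j < dim_col (1\<^sub>m 2 :: 'k mat)"
      then have ij: "i < 2" "j < 2" by auto
      have "(?P * ?Q) $$ (i,j) = ([\<phi>, \<psi>] ! i) \<bullet> ([v, u] ! j)"
        using ij Pc Qc Pr Qcol by simp
      also have "\<dots> = (1\<^sub>m 2 :: 'k mat) $$ (i,j)"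
        using ij \<phi>w[OF v] \<phi>w[OF uc] \<psi>Xv \<psi>v XXw[OF v] \<psi> unfolding u_def
        by (auto simp: less_2_cases_iff)
      finally show "(?P * ?Q) $$ (i,j) = (1\<^sub>m 2 :: 'k mat) $$ (i,j)" .
    qed (use Pc Qc in auto)
    show "?P * Z = Zmat2 q c * ?P"
    proof (rule eq_matI)
      fix i j assume "i < dim_row (Zmat2 q c * ?P)" "j < dim_col (Zmat2 q c * ?P)"
      then have ij: "i < 2" "j < d" using Pc by (auto simp: Zmat2_def)
      have "(?P * Z) $$ (i,j) = ([\<phi>, \<psi>] ! i) \<bullet> (Z *\<^sub>v unit_vec d j)"
        using ij Pc Zc Pr mult_unit_col[OF Zc ij(2)] by simp
      also have "\<dots> = (if i = 0 then c * \<phi> $ j else q * c * \<psi> $ j)"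
        using ij \<phi>Z[of "unit_vec d j"] \<psi>Z[of "unit_vec d j"] \<phi>c \<psi>
        by (auto simp: less_2_cases_iff)
      also have "\<dots> = (Zmat2 q c * ?P) $$ (i,j)"
        using ij \<phi>c \<psi>
        by (auto simp: less_2_cases_iff Zmat2_def scalar_prod_def sum2 mat_of_rows_index)
      finally show "(?P * Z) $$ (i,j) = (Zmat2 q c * ?P) $$ (i,j)" .
    qed (use Pc Zc in \<open>auto simp: Zmat2_def\<close>)
    show "?P * X = Xmat2 * ?P"
    proof (rule eq_matI)
      fix i j assume "i < dim_row (Xmat2 * ?P)" "j < dim_col (Xmat2 * ?P)"
      then have ij: "i < 2" "j < d" using Pc by (auto simp: Xmat2_def)
      have "(?P * X) $$ (i,j) = ([\<phi>, \<psi>] ! i) \<bullet> (X *\<^sub>v unit_vec d j)"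
        using ij Pc Xc Pr mult_unit_col[OF Xc ij(2)] by simp
      also have "\<dots> = (if i = 0 then 0 else \<phi> $ j)"
        using ij \<phi>w[of "X *\<^sub>v unit_vec d j"] XXw[of "unit_vec d j"] \<phi>w[of "unit_vec d j"] \<phi>c \<psi> Xc
        by (auto simp: less_2_cases_iff)
      also have "\<dots> = (Xmat2 * ?P) $$ (i,j)"
        using ij \<phi>c \<psi>
        by (auto simp: less_2_cases_iff Xmat2_def scalar_prod_def sum2 mat_of_rows_index)
      finally show "(?P * X) $$ (i,j) = (Xmat2 * ?P) $$ (i,j)" .
    qed (use Pc Xc in \<open>auto simp: Xmat2_def\<close>)
    show "Z * ?Q = ?Q * Zmat2 q c"
    proof (rule eq_matI)
      fix i j assume "i < dim_row (?Q * Zmat2 q c)" "j < dim_col (?Q * Zmat2 q c)"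
      then have ij: "i < d" "j < 2" using Qc by (auto simp: Zmat2_def)
      have "(Z * ?Q) $$ (i,j) = (Z *\<^sub>v ([v, u] ! j)) $ i"
        using ij Qc Zc Qcol by simp
      also have "\<dots> = (?Q * Zmat2 q c) $$ (i,j)"
        using ij Zv Zu v uc
        by (auto simp: less_2_cases_iff Zmat2_def scalar_prod_def sum2 mat_of_cols_index)
      finally show "(Z * ?Q) $$ (i,j) = (?Q * Zmat2 q c) $$ (i,j)" .
    qed (use Qc Zc in \<open>auto simp: Zmat2_def\<close>)
    show "X * ?Q = ?Q * Xmat2"
    proof (rule eq_matI)
      fix i j assume "i < dim_row (?Q * Xmat2)" "j < dim_col (?Q * Xmat2)"
      then have ij: "i < d" "j < 2" using Qc by (auto simp: Xmat2_def)
      have "(X * ?Q) $$ (i,j) = (X *\<^sub>v ([v, u] ! j)) $ i"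
        using ij Qc Xc Qcol by simp
      also have "\<dots> = (?Q * Xmat2) $$ (i,j)"
        using ij XXw[OF v] v uc unfolding u_def
        by (auto simp: less_2_cases_iff Xmat2_def scalar_prod_def sum2 mat_of_cols_index)
      finally show "(X * ?Q) $$ (i,j) = (?Q * Xmat2) $$ (i,j)" .
    qed (use Qc Xc in \<open>auto simp: Xmat2_def\<close>)
  qed
qed


lemma pow_mat_add:
  fixes A :: "'a::semiring_1 mat"
  assumes A: "A \<in> carrier_mat d d"
  shows "A ^\<^sub>m a * A ^\<^sub>m b = A ^\<^sub>m (a + b)"
proof (induction b)
  case 0 then show ?case using A by simp
next
  case (Suc b)
  have "A ^\<^sub>m a * A ^\<^sub>m Suc b = (A ^\<^sub>m a * A ^\<^sub>m b) * A"
    using assoc_mult_mat[OF pow_carrier_mat[OF A] pow_carrier_mat[OF A] A] by simp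
  then show ?case using Suc by simp
qed

lemma pow_mat_one_left:
  fixes A :: "'a::semiring_1 mat"
  assumes A: "A \<in> carrier_mat d d"
  shows "A * A ^\<^sub>m b = A ^\<^sub>m (Suc b)"
  using pow_mat_add[OF A, of 1 b] A by simp

lemma transpose_pow:
  fixes A :: "'a::comm_semiring_1 mat"
  assumes A: "A \<in> carrier_mat d d"
  shows "transpose_mat (A ^\<^sub>m k) = (transpose_mat A) ^\<^sub>m k"
proof (induction k)
  case 0 then show ?case using A by simp
next
  case (Suc k)
  have "transpose_mat (A ^\<^sub>m Suc k) = transpose_mat (A * A ^\<^sub>m k)"
    using pow_mat_one_left[OF A] by simp
  also have "\<dots> = transpose_mat (A ^\<^sub>m k) * transpose_mat A"
    by (rule transpose_mult[OF A pow_carrier_mat[OF A]])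
  finally show ?case using Suc by simp
qed

lemma pow_eig:
  fixes A :: "'a::comm_ring_1 mat"
  assumes A: "A \<in> carrier_mat d d" and u: "u \<in> carrier_vec d" and Au: "A *\<^sub>v u = \<mu> \<cdot>\<^sub>v u"
  shows "A ^\<^sub>m k *\<^sub>v u = (\<mu> ^ k) \<cdot>\<^sub>v u"
proof (induction k)
  case 0 then show ?case using A u by (intro eq_vecI) auto
next
  case (Suc k)
  have "A ^\<^sub>m Suc k *\<^sub>v u = A ^\<^sub>m k *\<^sub>v (A *\<^sub>v u)"
    using assoc_mult_mat_vec[OF pow_carrier_mat[OF A] A u] by simp
  also have "\<dots> = \<mu> \<cdot>\<^sub>v (A ^\<^sub>m k *\<^sub>v u)" unfolding Au
    using A u by (intro eq_vecI) auto
  also have "\<dots> = (\<mu> ^ Suc k) \<cdot>\<^sub>v u" unfolding Suc using u by (intro eq_vecI) auto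
  finally show ?case .
qed

definition prj :: "'k::field mat \<Rightarrow> nat \<Rightarrow> 'k \<Rightarrow> 'k vec \<Rightarrow> 'k vec" where
  "prj A N r w = vec (dim_row A) (\<lambda>a. \<Sum>j<N. (inverse r)^j * (A ^\<^sub>m j *\<^sub>v w) $ a)"

lemma prj_carrier: "A \<in> carrier_mat d d \<Longrightarrow> prj A N r w \<in> carrier_vec d"
  unfolding prj_def by auto

lemma prj_index: "A \<in> carrier_mat d d \<Longrightarrow> a < d \<Longrightarrow> prj A N r w $ a = (\<Sum>j<N. (inverse r)^j * (A ^\<^sub>m j *\<^sub>v w) $ a)"
  unfolding prj_def by auto

lemma cyc_sum:
  fixes c r :: "'k::field"
  assumes "g N = g 0" "c ^ N = 1" "r * c = 1"
  shows "(\<Sum>j<N. c^j * g (Suc j)) = r * (\<Sum>j<N. c^j * g j)"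
proof -
  have "(\<Sum>j<N. c^Suc j * g (Suc j)) + c^0 * g 0 = (\<Sum>j<Suc N. c^j * g j)"
    by (subst sum.lessThan_Suc_shift) simp
  also have "\<dots> = (\<Sum>j<N. c^j * g j) + c^N * g N" by simp
  finally have "(\<Sum>j<N. c^Suc j * g (Suc j)) = (\<Sum>j<N. c^j * g j)" using assms by simp
  moreover have "(\<Sum>j<N. c^j * g (Suc j)) = r * (\<Sum>j<N. c^Suc j * g (Suc j))"
    by (simp add: sum_distrib_left mult.assoc[symmetric] assms(3))
  ultimately show ?thesis by simp
qed

lemma prj_eig:
  fixes A :: "'k::field mat"
  assumes A: "A \<in> carrier_mat d d" and w: "w \<in> carrier_vec d" and AN: "A ^\<^sub>m N = 1\<^sub>m d"
    and rN: "r ^ N = 1" and N: "N > 0"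
  shows "A *\<^sub>v prj A N r w = r \<cdot>\<^sub>v prj A N r w"
proof (rule eq_vecI)
  fix a assume "a < dim_vec (r \<cdot>\<^sub>v prj A N r w)"
  then have a: "a < d" using prj_carrier[OF A, of N r w] by simp
  have r0: "r \<noteq> 0" using rN N by (metis power_0_left zero_neq_one neq0_conv)
  have "(A *\<^sub>v prj A N r w) $ a = (\<Sum>b<d. A $$ (a,b) * prj A N r w $ b)"
    using A a prj_carrier[OF A, of N r w] by (simp add: scalar_prod_def atLeast0LessThan)
  also have "\<dots> = (\<Sum>b<d. A $$ (a,b) * (\<Sum>j<N. (inverse r)^j * (A ^\<^sub>m j *\<^sub>v w) $ b))"
    using prj_index[OF A] by (intro sum.cong) auto
  also have "\<dots> = (\<Sum>j<N. (inverse r)^j * (\<Sum>b<d. A $$ (a,b) * (A ^\<^sub>m j *\<^sub>v w) $ b))"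
    by (simp add: sum_distrib_left mult.left_commute sum.swap[of _ "{..<d}"])
  also have "\<dots> = (\<Sum>j<N. (inverse r)^j * (A ^\<^sub>m Suc j *\<^sub>v w) $ a)"
  proof (rule sum.cong[OF refl])
    fix j
    have "(\<Sum>b<d. A $$ (a,b) * (A ^\<^sub>m j *\<^sub>v w) $ b) = (A *\<^sub>v (A ^\<^sub>m j *\<^sub>v w)) $ a"
      using A a w by (simp add: scalar_prod_def atLeast0LessThan)
    also have "\<dots> = (A ^\<^sub>m Suc j *\<^sub>v w) $ a"
      using assoc_mult_mat_vec[OF A pow_carrier_mat[OF A] w] pow_mat_one_left[OF A] by simp
    finally show "(inverse r)^j * (\<Sum>b<d. A $$ (a,b) * (A ^\<^sub>m j *\<^sub>v w) $ b) = (inverse r)^j * (A ^\<^sub>m Suc j *\<^sub>v w) $ a"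
      by simp
  qed
  also have "\<dots> = r * (\<Sum>j<N. (inverse r)^j * (A ^\<^sub>m j *\<^sub>v w) $ a)"
    by (rule cyc_sum[where g = "\<lambda>j. (A ^\<^sub>m j *\<^sub>v w) $ a"])
       (use AN w A rN r0 in \<open>auto simp: power_inverse\<close>)
  also have "\<dots> = (r \<cdot>\<^sub>v prj A N r w) $ a" using a prj_index[OF A a, of N r w] prj_carrier[OF A, of N r w] by simp
  finally show "(A *\<^sub>v prj A N r w) $ a = (r \<cdot>\<^sub>v prj A N r w) $ a" .
qed (use A prj_carrier[OF A, of N r w] in auto)


lemma prj_functional:
  fixes Z :: "'k::field mat"
  assumes Z: "Z \<in> carrier_mat d d" and u: "u \<in> carrier_vec d" and \<phi>: "\<phi> \<in> carrier_vec d"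
    and Zu: "Z *\<^sub>v u = \<mu> \<cdot>\<^sub>v u" and \<mu>: "\<mu> \<noteq> 0"
  shows "prj (transpose_mat Z) N \<mu> \<phi> \<bullet> u = of_nat N * (\<phi> \<bullet> u)"
proof -
  have Zt: "transpose_mat Z \<in> carrier_mat d d" using Z by simp
  have "prj (transpose_mat Z) N \<mu> \<phi> \<bullet> u = (\<Sum>b<d. prj (transpose_mat Z) N \<mu> \<phi> $ b * u $ b)"
    using u by (simp add: scalar_prod_def atLeast0LessThan)
  also have "\<dots> = (\<Sum>b<d. (\<Sum>j<N. (inverse \<mu>)^j * (transpose_mat Z ^\<^sub>m j *\<^sub>v \<phi>) $ b) * u $ b)"
    using prj_index[OF Zt] by (intro sum.cong) auto
  also have "\<dots> = (\<Sum>b<d. \<Sum>j<N. (inverse \<mu>)^j * ((transpose_mat Z ^\<^sub>m j *\<^sub>v \<phi>) $ b * u $ b))"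
    by (simp add: sum_distrib_right mult.assoc)
  also have "\<dots> = (\<Sum>j<N. \<Sum>b<d. (inverse \<mu>)^j * ((transpose_mat Z ^\<^sub>m j *\<^sub>v \<phi>) $ b * u $ b))"
    by (rule sum.swap)
  also have "\<dots> = (\<Sum>j<N. (inverse \<mu>)^j * (\<Sum>b<d. (transpose_mat Z ^\<^sub>m j *\<^sub>v \<phi>) $ b * u $ b))"
    by (simp add: sum_distrib_left)
  also have "\<dots> = (\<Sum>j<N. (inverse \<mu>)^j * (\<phi> \<bullet> (Z ^\<^sub>m j *\<^sub>v u)))"
  proof (rule sum.cong[OF refl])
    fix j
    have "(\<Sum>b<d. (transpose_mat Z ^\<^sub>m j *\<^sub>v \<phi>) $ b * u $ b) = (transpose_mat (Z ^\<^sub>m j) *\<^sub>v \<phi>) \<bullet> u"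
      using u Z \<phi> transpose_pow[OF Z, of j] by (simp add: scalar_prod_def atLeast0LessThan)
    also have "\<dots> = \<phi> \<bullet> (Z ^\<^sub>m j *\<^sub>v u)"
      by (rule transpose_vec_mult_scalar[OF pow_carrier_mat[OF Z] u \<phi>])
    finally show "(inverse \<mu>)^j * (\<Sum>b<d. (transpose_mat Z ^\<^sub>m j *\<^sub>v \<phi>) $ b * u $ b) = (inverse \<mu>)^j * (\<phi> \<bullet> (Z ^\<^sub>m j *\<^sub>v u))"
      by simp
  qed
  also have "\<dots> = (\<Sum>j<N. \<phi> \<bullet> u)"
  proof (rule sum.cong[OF refl])
    fix j
    have "(inverse \<mu>)^j * (\<phi> \<bullet> (Z ^\<^sub>m j *\<^sub>v u)) = ((inverse \<mu>)^j * \<mu>^j) * (\<phi> \<bullet> u)"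
      unfolding pow_eig[OF Z u Zu] using \<phi> u by simp
    also have "\<dots> = \<phi> \<bullet> u" using \<mu> by (simp add: power_mult_distrib[symmetric])
    finally show "(inverse \<mu>)^j * (\<phi> \<bullet> (Z ^\<^sub>m j *\<^sub>v u)) = \<phi> \<bullet> u" .
  qed
  also have "\<dots> = of_nat N * (\<phi> \<bullet> u)" by simp
  finally show ?thesis .
qed

lemma root_sum:
  fixes q :: "'k::field"
  assumes pr: "primitive_root N q" and N: "N > 0" and j: "j < N"
  shows "(\<Sum>i<N. (inverse (q^i))^j) = (if j = 0 then of_nat N else 0)"
proof (cases "j = 0")
  case True then show ?thesis by simp
next
  case False
  define x where "x = (inverse q)^j"
  have eq: "(inverse (q^i))^j = x^i" for i
    unfolding x_def by (simp add: power_inverse[symmetric] power_mult[symmetric] mult.commute)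
  have "q^j \<noteq> 1" using pr False j unfolding primitive_root_def by auto
  then have x1: "x \<noteq> 1" unfolding x_def by (simp add: power_inverse)
  have "x^N = inverse ((q^N)^j)" unfolding x_def
    by (simp add: power_inverse[symmetric] power_mult[symmetric] mult.commute)
  then have xN: "x^N = 1" using pr unfolding primitive_root_def by simp
  show ?thesis unfolding eq using x1 xN False by (simp add: sum_gp_strict)
qed

lemma prj_sum:
  fixes A :: "'k::field mat"
  assumes A: "A \<in> carrier_mat d d" and w: "w \<in> carrier_vec d"
    and pr: "primitive_root N q" and N: "N > 0" and a: "a < d"
  shows "(\<Sum>i<N. prj A N (q^i) w $ a) = of_nat N * w $ a"
proof -
  have "(\<Sum>i<N. prj A N (q^i) w $ a) = (\<Sum>i<N. \<Sum>j<N. (inverse (q^i))^j * (A ^\<^sub>m j *\<^sub>v w) $ a)"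
    using prj_index[OF A a] by simp
  also have "\<dots> = (\<Sum>j<N. \<Sum>i<N. (inverse (q^i))^j * (A ^\<^sub>m j *\<^sub>v w) $ a)"
    by (rule sum.swap)
  also have "\<dots> = (\<Sum>j<N. (\<Sum>i<N. (inverse (q^i))^j) * (A ^\<^sub>m j *\<^sub>v w) $ a)"
    by (simp add: sum_distrib_right)
  also have "\<dots> = (\<Sum>j<N. (if j = 0 then of_nat N * (A ^\<^sub>m j *\<^sub>v w) $ a else 0))"
    using root_sum[OF pr N] by (intro sum.cong) auto
  also have "\<dots> = of_nat N * (A ^\<^sub>m 0 *\<^sub>v w) $ a"
    using N by (simp add: sum.delta)
  also have "\<dots> = of_nat N * w $ a" using A w by simp
  finally show ?thesis .
qed

lemma ex_nonzero:
  fixes A B :: "'k::field_char_0 mat"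
  assumes A: "A \<in> carrier_mat d d" and B: "B \<in> carrier_mat m d" and w: "w \<in> carrier_vec d"
    and pr: "primitive_root N q" and N: "N > 0" and Bw: "B *\<^sub>v w \<noteq> 0\<^sub>v m"
  shows "\<exists>i<N. B *\<^sub>v prj A N (q^i) w \<noteq> 0\<^sub>v m"
proof (rule ccontr)
  assume "\<not> ?thesis"
  then have all0: "\<And>i. i < N \<Longrightarrow> B *\<^sub>v prj A N (q^i) w = 0\<^sub>v m" by auto
  have "B *\<^sub>v w = 0\<^sub>v m"
  proof (rule eq_vecI)
    fix a assume "a < dim_vec (0\<^sub>v m :: 'k vec)"
    then have a: "a < m" by simp
    have "of_nat N * (B *\<^sub>v w) $ a = (\<Sum>b<d. B $$ (a,b) * (of_nat N * w $ b))"
      using B w a by (simp add: scalar_prod_def atLeast0LessThan sum_distrib_left mult.left_commute)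
    also have "\<dots> = (\<Sum>b<d. B $$ (a,b) * (\<Sum>i<N. prj A N (q^i) w $ b))"
      using prj_sum[OF A w pr N] by (intro sum.cong) auto
    also have "\<dots> = (\<Sum>b<d. \<Sum>i<N. B $$ (a,b) * prj A N (q^i) w $ b)"
      by (simp add: sum_distrib_left)
    also have "\<dots> = (\<Sum>i<N. \<Sum>b<d. B $$ (a,b) * prj A N (q^i) w $ b)"
      by (rule sum.swap)
    also have "\<dots> = (\<Sum>i<N. (B *\<^sub>v prj A N (q^i) w) $ a)"
      using B a prj_carrier[OF A, THEN carrier_vecD] by (intro sum.cong) (auto simp: scalar_prod_def atLeast0LessThan)
    also have "\<dots> = 0" using all0 a by simp
    finally show "(B *\<^sub>v w) $ a = 0\<^sub>v m $ a" using N a by simp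
  qed (use B in auto)
  with Bw show False by simp
qed


lemma nonzero_entry:
  assumes "v \<in> carrier_vec d" "v \<noteq> 0\<^sub>v d"
  shows "\<exists>k<d. v $ k \<noteq> 0"
  using assms by (metis eq_vecI carrier_vecD index_zero_vec(1) index_zero_vec(2))

lemma ex_vec_nonzero:
  fixes X :: "'a::semiring_1 mat"
  assumes X: "X \<in> carrier_mat d m" and X0: "X \<noteq> 0\<^sub>m d m"
  shows "\<exists>w\<in>carrier_vec m. X *\<^sub>v w \<noteq> 0\<^sub>v d"
proof (rule ccontr)
  assume "\<not> ?thesis"
  then have "\<And>w. w \<in> carrier_vec m \<Longrightarrow> X *\<^sub>v w = 0\<^sub>m d m *\<^sub>v w"
    using zero_mat_mult_vec by fastforce
  then have "X = 0\<^sub>m d m" by (intro mat_eq_on_vec[OF X]) auto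
  with X0 show False by simp
qed

lemma left_eig_exists:
  fixes Z :: "'k::field_char_0 mat"
  assumes Z: "Z \<in> carrier_mat d d" and ZN: "Z ^\<^sub>m N = 1\<^sub>m d" and N: "N > 0"
    and u: "u \<in> carrier_vec d" and u0: "u \<noteq> 0\<^sub>v d" and Zu: "Z *\<^sub>v u = \<mu> \<cdot>\<^sub>v u" and \<mu>N: "\<mu> ^ N = 1"
  shows "\<exists>\<psi>\<in>carrier_vec d. transpose_mat Z *\<^sub>v \<psi> = \<mu> \<cdot>\<^sub>v \<psi> \<and> \<psi> \<bullet> u = 1"
proof -
  have Zt: "transpose_mat Z \<in> carrier_mat d d" using Z by simp
  have ZtN: "transpose_mat Z ^\<^sub>m N = 1\<^sub>m d" using transpose_pow[OF Z, of N] ZN by simp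
  have \<mu>0: "\<mu> \<noteq> 0" using \<mu>N N by (metis power_0_left zero_neq_one neq0_conv)
  obtain k where k: "k < d" "u $ k \<noteq> 0" using nonzero_entry[OF u u0] by blast
  define \<psi>0 where "\<psi>0 = prj (transpose_mat Z) N \<mu> (unit_vec d k)"
  have \<psi>0c: "\<psi>0 \<in> carrier_vec d" unfolding \<psi>0_def by (rule prj_carrier[OF Zt])
  have e: "transpose_mat Z *\<^sub>v \<psi>0 = \<mu> \<cdot>\<^sub>v \<psi>0"
    unfolding \<psi>0_def by (rule prj_eig[OF Zt _ ZtN \<mu>N N]) simp
  have "\<psi>0 \<bullet> u = of_nat N * (unit_vec d k \<bullet> u)"
    unfolding \<psi>0_def by (rule prj_functional[OF Z u _ Zu \<mu>0]) simp
  also have "\<dots> = of_nat N * u $ k" using u k by simp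
  finally have p: "\<psi>0 \<bullet> u = of_nat N * u $ k" .
  then have p0: "\<psi>0 \<bullet> u \<noteq> 0" using N k by simp
  define \<psi> where "\<psi> = inverse (\<psi>0 \<bullet> u) \<cdot>\<^sub>v \<psi>0"
  have "\<psi> \<in> carrier_vec d" unfolding \<psi>_def using \<psi>0c by simp
  moreover have "transpose_mat Z *\<^sub>v \<psi> = \<mu> \<cdot>\<^sub>v \<psi>"
    unfolding \<psi>_def mult_mat_vec[OF Zt \<psi>0c] e by (simp add: smult_smult_assoc mult.commute)
  moreover have "\<psi> \<bullet> u = 1" unfolding \<psi>_def using \<psi>0c u p0 by simp
  ultimately show ?thesis by blast
qed

lemma smult_one_mat: "(1::'a::semiring_1) \<cdot>\<^sub>m A = A"
  by (intro eq_matI) auto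

lemma classify:
  fixes q :: "'k::field_char_0" and n :: nat
  assumes n: "n \<ge> 1" and pr: "primitive_root (2*n) q"
    and wh: "is_wH_mod n q (d,Z,X)" and ind: "indecomposable (d,Z,X)"
  shows "\<exists>j. valid_idx n j \<and> mod_iso (d,Z,X) (std_mod q j)"
proof -
  have Zc: "Z \<in> carrier_mat d d" and Xc: "X \<in> carrier_mat d d"
    and Zpow: "Z ^\<^sub>m (2*n+1) = Z" and ZX: "Z * X = q \<cdot>\<^sub>m (X * Z)" and XX: "X * X = 0\<^sub>m d d"
    using wh unfolding is_wH_mod_def by auto
  define N where "N = 2*n"
  have N: "N > 0" unfolding N_def using n by simp
  have prN: "primitive_root N q" using pr unfolding N_def .
  have qN: "q ^ N = 1" using prN unfolding primitive_root_def by simp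
  have q0: "q \<noteq> 0" using qN N by (metis power_0_left zero_neq_one neq0_conv)
  have q1: "q \<noteq> 1" using prN n unfolding primitive_root_def N_def
    by (metis One_nat_def Suc_le_eq less_2_cases_iff mult_le_mono2 nat_mult_1_right numeral_2_eq_2 power_one_right zero_less_one le_neq_implies_less le_trans order.refl)
  have ZSN: "Z ^\<^sub>m Suc N = Z" using Zpow unfolding N_def by simp
  have shift: "Z ^\<^sub>m (Suc k + N) = Z ^\<^sub>m (Suc k)" for k
  proof (induction k)
    case 0 then show ?case using ZSN by simp
  next
    case (Suc k) then show ?case by simp
  qed
  have ZkX: "Z ^\<^sub>m k * X = q^k \<cdot>\<^sub>m (X * Z ^\<^sub>m k)" for k
  proof (induction k)
    case 0 then show ?case using Xc Zc by (simp add: smult_one_mat)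
  next
    case (Suc k)
    have Zk: "Z ^\<^sub>m k \<in> carrier_mat d d" using Zc by simp
    have "Z ^\<^sub>m Suc k * X = Z ^\<^sub>m k * (Z * X)" using assoc_mult_mat[OF Zk Zc Xc] by simp
    also have "\<dots> = q \<cdot>\<^sub>m (Z ^\<^sub>m k * (X * Z))" unfolding ZX
      by (rule mult_smult_distrib[OF Zk mult_carrier_mat[OF Xc Zc]])
    also have "Z ^\<^sub>m k * (X * Z) = (Z ^\<^sub>m k * X) * Z" using assoc_mult_mat[OF Zk Xc Zc] by simp
    also have "\<dots> = q^k \<cdot>\<^sub>m ((X * Z ^\<^sub>m k) * Z)" unfolding Suc
      by (rule mult_smult_assoc_mat[OF mult_carrier_mat[OF Xc Zk] Zc])
    also have "(X * Z ^\<^sub>m k) * Z = X * Z ^\<^sub>m Suc k" using assoc_mult_mat[OF Xc Zk Zc] by simp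
    finally show ?case by (intro eq_matI) auto
  qed
  define E where "E = Z ^\<^sub>m N"
  have Ec: "E \<in> carrier_mat d d" unfolding E_def using Zc by simp
  have EE: "E * E = E"
  proof -
    have "E * E = Z ^\<^sub>m (Suc (N - 1) + N)" unfolding E_def pow_mat_add[OF Zc] using N by simp
    also have "\<dots> = E" unfolding shift E_def using N by simp
    finally show ?thesis .
  qed
  have EZ: "E * Z = Z * E" unfolding E_def using pow_mat_one_left[OF Zc] by simp
  have EX: "E * X = X * E" unfolding E_def ZkX qN smult_one_mat ..
  from idem_trivial[OF ind Zc Xc Ec EE EZ EX] have "E = 0\<^sub>m d d \<or> E = 1\<^sub>m d" .
  then show ?thesis
  proof
    assume E0: "E = 0\<^sub>m d d"
    have Z0: "Z = 0\<^sub>m d d"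
    proof -
      have "Z = E * Z" unfolding E_def using ZSN by simp
      then show ?thesis unfolding E0 using Zc by simp
    qed
    show ?thesis
    proof (cases "X = 0\<^sub>m d d")
      case True
      have d0: "d > 0" using ind unfolding indecomposable_def by simp
      have "mod_iso (d,Z,X) (1, mat 1 1 (\<lambda>_. 0), 0\<^sub>m 1 1)"
        by (rule summand1[OF ind Zc Xc, of "unit_vec d 0" "unit_vec d 0" 0])
           (use d0 Z0 True in \<open>auto simp: zero_mat_mult_vec\<close>)
      moreover have "mat 1 1 (\<lambda>_. 0) = (0\<^sub>m 1 1 :: 'k mat)" by (intro eq_matI) auto
      ultimately have "mod_iso (d,Z,X) (std_mod q N0)" by (simp add: std_mod_def)
      then show ?thesis by (intro exI[of _ N0]) (simp add: valid_idx_def)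
    next
      case False
      obtain w where w: "w \<in> carrier_vec d" "X *\<^sub>v w \<noteq> 0\<^sub>v d" using ex_vec_nonzero[OF Xc False] by blast
      have Xwc: "X *\<^sub>v w \<in> carrier_vec d" using Xc w by simp
      obtain k where k: "k < d" "(X *\<^sub>v w) $ k \<noteq> 0" using nonzero_entry[OF Xwc w(2)] by blast
      define \<phi> where "\<phi> = inverse ((X *\<^sub>v w) $ k) \<cdot>\<^sub>v unit_vec d k"
      have \<phi>c: "\<phi> \<in> carrier_vec d" unfolding \<phi>_def by simp
      have \<phi>Xw: "\<phi> \<bullet> (X *\<^sub>v w) = 1" unfolding \<phi>_def
        using smult_scalar_prod_distrib[OF unit_vec_carrier Xwc] k Xwc by simp
      have XXw: "X *\<^sub>v (X *\<^sub>v w) = 0\<^sub>v d"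
        using assoc_mult_mat_vec[OF Xc Xc w(1), symmetric] XX w zero_mat_mult_vec by simp
      define \<phi>' where "\<phi>' = transpose_mat X *\<^sub>v \<phi>"
      have \<phi>'c: "\<phi>' \<in> carrier_vec d" unfolding \<phi>'_def using Xc \<phi>c by simp
      have tX: "\<phi>' \<bullet> u = \<phi> \<bullet> (X *\<^sub>v u)" if "u \<in> carrier_vec d" for u
        unfolding \<phi>'_def by (rule transpose_vec_mult_scalar[OF Xc that \<phi>c])
      define \<psi> where "\<psi> = \<phi> - (\<phi> \<bullet> w) \<cdot>\<^sub>v \<phi>'"
      have \<psi>c: "\<psi> \<in> carrier_vec d" unfolding \<psi>_def using \<phi>c \<phi>'c by simp
      have \<psi>u: "\<psi> \<bullet> u = \<phi> \<bullet> u - (\<phi> \<bullet> w) * (\<phi> \<bullet> (X *\<^sub>v u))" if "u \<in> carrier_vec d" for u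
        unfolding \<psi>_def using minus_scalar_prod_distrib[OF \<phi>c _ that, of "(\<phi> \<bullet> w) \<cdot>\<^sub>v \<phi>'"] \<phi>'c that tX
        by simp
      have \<psi>Xw: "\<psi> \<bullet> (X *\<^sub>v w) = 1" using \<psi>u[OF Xwc] \<phi>Xw XXw \<phi>c by simp
      have \<psi>w: "\<psi> \<bullet> w = 0" using \<psi>u[OF w(1)] \<phi>Xw by simp
      have Z\<psi>: "transpose_mat Z *\<^sub>v \<psi> = (q*0) \<cdot>\<^sub>v \<psi>"
        using Z0 \<psi>c zero_mat_mult_vec by (intro eq_vecI) auto
      have "mod_iso (d,Z,X) (2, Zmat2 q 0, Xmat2)"
        by (rule summand2[OF ind Zc Xc q0 ZX XX w(1) \<psi>c _ Z\<psi> \<psi>Xw \<psi>w])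
           (use Z0 w(1) zero_mat_mult_vec in \<open>intro eq_vecI, auto\<close>)
      moreover have "Zmat2 q 0 = (0\<^sub>m 2 2 :: 'k mat)" unfolding Zmat2_def by (intro eq_matI) auto
      ultimately have "mod_iso (d,Z,X) (std_mod q N1)" by (simp add: std_mod_def Xmat2_def)
      then show ?thesis by (intro exI[of _ N1]) (simp add: valid_idx_def)
    qed
  next
    assume E1: "E = 1\<^sub>m d"
    have ZN: "Z ^\<^sub>m N = 1\<^sub>m d" using E1 unfolding E_def .
    have qiN: "(q^i)^N = 1" for i
      by (metis qN power_mult mult.commute power_one)
    show ?thesis
    proof (cases "X = 0\<^sub>m d d")
      case True
      have d0: "d > 0" using ind unfolding indecomposable_def by simp
      define w :: "'k vec" where "w = unit_vec d 0"
      have wc: "w \<in> carrier_vec d" unfolding w_def by simp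
      have "1\<^sub>m d *\<^sub>v w \<noteq> 0\<^sub>v d"
      proof
        assume "1\<^sub>m d *\<^sub>v w = 0\<^sub>v d"
        then have "w $ 0 = 0\<^sub>v d $ 0" using wc by simp
        then show False unfolding w_def using d0 by simp
      qed
      then obtain i where i: "i < N" "1\<^sub>m d *\<^sub>v prj Z N (q^i) w \<noteq> 0\<^sub>v d"
        using ex_nonzero[OF Zc one_carrier_mat wc prN N] by blast
      define v where "v = prj Z N (q^i) w"
      have vc: "v \<in> carrier_vec d" unfolding v_def by (rule prj_carrier[OF Zc])
      have v0: "v \<noteq> 0\<^sub>v d" using i vc unfolding v_def by simp
      have Zv: "Z *\<^sub>v v = q^i \<cdot>\<^sub>v v" unfolding v_def by (rule prj_eig[OF Zc wc ZN qiN N])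
      obtain \<psi> where \<psi>: "\<psi> \<in> carrier_vec d" "transpose_mat Z *\<^sub>v \<psi> = q^i \<cdot>\<^sub>v \<psi>" "\<psi> \<bullet> v = 1"
        using left_eig_exists[OF Zc ZN N vc v0 Zv qiN] by blast
      have "mod_iso (d,Z,X) (1, mat 1 1 (\<lambda>_. q^i), 0\<^sub>m 1 1)"
        by (rule summand1[OF ind Zc Xc vc \<psi>(1) Zv \<psi>(2) _ _ \<psi>(3)])
           (use True vc \<psi>(1) zero_mat_mult_vec in auto)
      then have "mod_iso (d,Z,X) (std_mod q (S i))" by (simp add: std_mod_def)
      then show ?thesis using i(1) unfolding N_def by (intro exI[of _ "S i"]) (simp add: valid_idx_def)
    next
      case False
      obtain w where w: "w \<in> carrier_vec d" "X *\<^sub>v w \<noteq> 0\<^sub>v d" using ex_vec_nonzero[OF Xc False] by blast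
      obtain i where i: "i < N" "X *\<^sub>v prj Z N (q^i) w \<noteq> 0\<^sub>v d"
        using ex_nonzero[OF Zc Xc w(1) prN N w(2)] by blast
      define v where "v = prj Z N (q^i) w"
      define u where "u = X *\<^sub>v v"
      have vc: "v \<in> carrier_vec d" unfolding v_def by (rule prj_carrier[OF Zc])
      have uc: "u \<in> carrier_vec d" unfolding u_def using Xc vc by simp
      have u0: "u \<noteq> 0\<^sub>v d" using i unfolding u_def v_def by simp
      have Zv: "Z *\<^sub>v v = q^i \<cdot>\<^sub>v v" unfolding v_def by (rule prj_eig[OF Zc w(1) ZN qiN N])
      have Zu: "Z *\<^sub>v u = q^(Suc i) \<cdot>\<^sub>v u"
      proof -
        have "Z *\<^sub>v u = (Z * X) *\<^sub>v v" unfolding u_def using Zc Xc vc by simp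
        also have "\<dots> = q \<cdot>\<^sub>v (X *\<^sub>v (Z *\<^sub>v v))" unfolding ZX
          using smult_mat_vec[of "X*Z" d d v q] Xc Zc vc by simp
        also have "\<dots> = q^(Suc i) \<cdot>\<^sub>v u" unfolding Zv u_def using Xc vc
          by (simp add: mult_mat_vec smult_smult_assoc)
        finally show ?thesis .
      qed
      obtain \<psi> where \<psi>: "\<psi> \<in> carrier_vec d" "transpose_mat Z *\<^sub>v \<psi> = q^(Suc i) \<cdot>\<^sub>v \<psi>" "\<psi> \<bullet> u = 1"
        using left_eig_exists[OF Zc ZN N uc u0 Zu qiN] by blast
      have "q^(Suc i) * (\<psi> \<bullet> v) = (transpose_mat Z *\<^sub>v \<psi>) \<bullet> v" using \<psi> vc by simp
      also have "\<dots> = \<psi> \<bullet> (Z *\<^sub>v v)" by (rule transpose_vec_mult_scalar[OF Zc vc \<psi>(1)])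
      also have "\<dots> = q^i * (\<psi> \<bullet> v)" unfolding Zv using \<psi>(1) vc by simp
      finally have "(q^i * (q - 1)) * (\<psi> \<bullet> v) = 0" by (simp add: algebra_simps)
      then have \<psi>v: "\<psi> \<bullet> v = 0" using q0 q1 by simp
      have "mod_iso (d,Z,X) (2, Zmat2 q (q^i), Xmat2)"
        by (rule summand2[OF ind Zc Xc q0 ZX XX vc \<psi>(1) Zv]) (use \<psi> \<psi>v in \<open>simp_all add: u_def\<close>)
      moreover have "Zmat2 q (q^i) = mat 2 2 (\<lambda>(r,c). if r = c then q ^ (i + r) else 0)"
        unfolding Zmat2_def by (intro eq_matI) (auto simp: less_2_cases_iff)
      ultimately have "mod_iso (d,Z,X) (std_mod q (M i))" by (simp add: std_mod_def Xmat2_def)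
      then show ?thesis using i(1) unfolding N_def by (intro exI[of _ "M i"]) (simp add: valid_idx_def)
    qed
  qed
qed


definition Dmat :: "nat \<Rightarrow> (nat \<Rightarrow> 'a::semiring_1) \<Rightarrow> 'a mat" where
  "Dmat m f = mat m m (\<lambda>(r,c). if r = c then f r else 0)"

lemma Dmat_pow: "Dmat m f ^\<^sub>m k = Dmat m (\<lambda>r. f r ^ k)"
proof (induction k)
  case 0 then show ?case unfolding Dmat_def by (intro eq_matI) auto
next
  case (Suc k)
  show ?case unfolding pow_mat.simps Suc
  proof (rule eq_matI)
    fix r c assume rc: "r < dim_row (Dmat m (\<lambda>r. f r ^ Suc k))" "c < dim_col (Dmat m (\<lambda>r. f r ^ Suc k))"
    then have rc': "r < m" "c < m" unfolding Dmat_def by auto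
    have "(Dmat m (\<lambda>r. f r ^ k) * Dmat m f) $$ (r,c) = (\<Sum>l\<in>{0..<m}. (if r = l then f r ^ k else 0) * (if l = c then f l else 0))"
      using rc' unfolding Dmat_def by (simp add: scalar_prod_def)
    also have "\<dots> = (\<Sum>l\<in>{0..<m}. if l = r then (if r = c then f r * f r ^ k else 0) else 0)"
      by (intro sum.cong) (auto simp: power_commutes)
    also have "\<dots> = Dmat m (\<lambda>r. f r ^ Suc k) $$ (r,c)"
      using rc' unfolding Dmat_def by simp
    finally show "(Dmat m (\<lambda>r. f r ^ k) * Dmat m f) $$ (r,c) = Dmat m (\<lambda>r. f r ^ Suc k) $$ (r,c)" .
  qed (auto simp: Dmat_def)
qed

lemma std_S: "std_mod q (S i) = (1, Dmat 1 (\<lambda>_. q^i), 0\<^sub>m 1 1)"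
  unfolding std_mod_def Dmat_def by (auto intro!: eq_matI)
lemma std_N0: "std_mod q N0 = (1, Dmat 1 (\<lambda>_. 0), 0\<^sub>m 1 1)"
  unfolding std_mod_def Dmat_def by (auto intro!: eq_matI)
lemma std_M: "std_mod q (M i) = (2, Dmat 2 (\<lambda>r. q^(i+r)), Xmat2)"
  unfolding std_mod_def Dmat_def Xmat2_def by (auto intro!: eq_matI)
lemma std_N1: "std_mod q N1 = (2, Dmat 2 (\<lambda>r. 0), Xmat2)"
  unfolding std_mod_def Dmat_def Xmat2_def by (auto intro!: eq_matI)

lemma pow_inj:
  fixes q :: "'k::field"
  assumes pr: "primitive_root N q" and N: "N > 0" and ij: "i < N" "j < N" and eq: "q^i = q^j"
  shows "i = j"
proof (rule ccontr)
  assume ne: "i \<noteq> j"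
  have q0: "q \<noteq> 0" using pr N unfolding primitive_root_def by (metis power_0_left zero_neq_one neq0_conv)
  have key: "q^(b - a) = 1" if "a < b" "q^a = q^b" for a b
  proof -
    have "a + (b - a) = b" using that by simp
    then have "q^a * q^(b-a) = q^b" by (metis power_add)
    then have "q^a * q^(b-a) = q^a * 1" using that by simp
    then show ?thesis using q0 by simp
  qed
  show False
  proof (cases "i < j")
    case True
    then show False using key[OF True eq] pr ij unfolding primitive_root_def by auto
  next
    case False
    then have "j < i" using ne by simp
    then show False using key[OF \<open>j < i\<close> eq[symmetric]] pr ij unfolding primitive_root_def by auto
  qed
qed

lemma Dmat_cong: "(\<And>r. r < m \<Longrightarrow> f r = g r) \<Longrightarrow> Dmat m f = Dmat m g"
  unfolding Dmat_def by (intro eq_matI) auto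

lemma wh_diag:
  fixes q :: "'k::field"
  assumes qN: "q^(2*n) = 1" and f: "\<And>r. r < m \<Longrightarrow> f r = 0 \<or> (\<exists>i. f r = q^i)"
    and X: "X \<in> carrier_mat m m" and XX: "X * X = 0\<^sub>m m m"
    and ZX: "Dmat m f * X = q \<cdot>\<^sub>m (X * Dmat m f)"
  shows "is_wH_mod n q (m, Dmat m f, X)"
proof -
  have fr: "f r ^ (2*n+1) = f r" if "r < m" for r
  proof -
    from f[OF that] show ?thesis
    proof
      assume "f r = 0" then show ?thesis by simp
    next
      assume "\<exists>i. f r = q^i"
      then obtain i where fi: "f r = q^i" by blast
      have "f r ^ (2*n+1) = (q^(2*n))^i * q^i" unfolding fi
        by (simp add: power_mult[symmetric] power_add[symmetric] mult.commute algebra_simps)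
      then show ?thesis using qN fi by simp
    qed
  qed
  have "Dmat m f ^\<^sub>m (2*n+1) = Dmat m f"
    unfolding Dmat_pow by (rule Dmat_cong) (rule fr)
  then show ?thesis unfolding is_wH_mod_def using X XX ZX by (auto simp: Dmat_def)
qed

lemma std_wh:
  fixes q :: "'k::field"
  assumes qN: "q^(2*n) = 1"
  shows "is_wH_mod n q (std_mod q j)"
proof (cases j)
  case (S i)
  show ?thesis unfolding S std_S
    by (rule wh_diag[OF qN]) (auto simp: Dmat_def intro!: eq_matI)
next
  case (M i)
  show ?thesis unfolding M std_M
    by (rule wh_diag[OF qN])
       (auto simp: Dmat_def Xmat2_def scalar_prod_def sum2 less_2_cases_iff intro!: eq_matI)
next
  case N0
  show ?thesis unfolding N0 std_N0
    by (rule wh_diag[OF qN]) (auto simp: Dmat_def intro!: eq_matI)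
next
  case N1
  show ?thesis unfolding N1 std_N1
    by (rule wh_diag[OF qN])
       (auto simp: Dmat_def Xmat2_def scalar_prod_def sum2 less_2_cases_iff intro!: eq_matI)
qed


lemma indec1: "indecomposable (1, Z, X :: 'k::field mat)"
proof -
  have False if U: "submod (1,Z,X) U" and W: "submod (1,Z,X) W"
    and U0: "U \<noteq> {0\<^sub>v 1}" and W0: "W \<noteq> {0\<^sub>v 1}" and UW: "U \<inter> W = {0\<^sub>v 1}" for U W
  proof -
    have Uc: "U \<subseteq> carrier_vec 1" and Wc: "W \<subseteq> carrier_vec 1" and 0: "0\<^sub>v 1 \<in> U"
      and sm: "\<And>c u. u \<in> U \<Longrightarrow> c \<cdot>\<^sub>v u \<in> U"
      using U W unfolding submod_def by auto
    have "0\<^sub>v 1 \<in> W" using W unfolding submod_def by auto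
    obtain u where u: "u \<in> U" "u \<noteq> 0\<^sub>v 1" using U0 0 by blast
    obtain w where w: "w \<in> W" "w \<noteq> 0\<^sub>v 1" using W0 \<open>0\<^sub>v 1 \<in> W\<close> by blast
    have uc: "u \<in> carrier_vec 1" using u Uc by auto
    have wc: "w \<in> carrier_vec 1" using w Wc by auto
    have u00: "u $ 0 \<noteq> 0" using nonzero_entry[OF uc u(2)] by auto
    have "(w $ 0 / u $ 0) \<cdot>\<^sub>v u = w" using uc wc u00 by (intro eq_vecI) auto
    then have "w \<in> U" using sm[OF u(1)] by metis
    then show False using w UW by auto
  qed
  then show ?thesis unfolding indecomposable_def by auto
qed

lemma e1_in_submod:
  fixes Z :: "'k::field mat"
  assumes U: "submod (2, Z, Xmat2) U" and u: "u \<in> U" "u \<noteq> 0\<^sub>v 2"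
  shows "unit_vec 2 1 \<in> U"
proof -
  have uc: "u \<in> carrier_vec 2" and sm: "\<And>c u. u \<in> U \<Longrightarrow> c \<cdot>\<^sub>v u \<in> U"
    and xm: "\<And>u. u \<in> U \<Longrightarrow> Xmat2 *\<^sub>v u \<in> U"
    using U u unfolding submod_def by auto
  have Xu: "Xmat2 *\<^sub>v u = vec 2 (\<lambda>r. if r = 1 then u $ 0 else 0)"
    using uc by (intro eq_vecI) (auto simp: Xmat2_def scalar_prod_def sum2 less_2_cases_iff)
  show ?thesis
  proof (cases "u $ 0 = 0")
    case False
    have "inverse (u $ 0) \<cdot>\<^sub>v (Xmat2 *\<^sub>v u) = unit_vec 2 1"
      unfolding Xu using False by (intro eq_vecI) (auto simp: less_2_cases_iff)
    then show ?thesis using sm[OF xm[OF u(1)]] by metis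
  next
    case True
    obtain k where k: "k < 2" "u $ k \<noteq> 0" using nonzero_entry[OF uc u(2)] by blast
    then have u1: "u $ 1 \<noteq> 0" using True by (auto simp: less_2_cases_iff)
    have "inverse (u $ 1) \<cdot>\<^sub>v u = unit_vec 2 1"
      using uc True u1 by (intro eq_vecI) (auto simp: less_2_cases_iff)
    then show ?thesis using sm[OF u(1)] by metis
  qed
qed

lemma indec2: "indecomposable (2, Z :: 'k::field mat, Xmat2)"
proof -
  have False if U: "submod (2,Z,Xmat2) U" and W: "submod (2,Z,Xmat2) W"
    and U0: "U \<noteq> {0\<^sub>v 2}" and W0: "W \<noteq> {0\<^sub>v 2}" and UW: "U \<inter> W = {0\<^sub>v 2}" for U W
  proof -
    have "0\<^sub>v 2 \<in> U" "0\<^sub>v 2 \<in> W" using U W unfolding submod_def by auto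
    then obtain u w where u: "u \<in> U" "u \<noteq> 0\<^sub>v 2" and w: "w \<in> W" "w \<noteq> 0\<^sub>v 2"
      using U0 W0 by blast
    have "unit_vec 2 1 \<in> U \<inter> W" using e1_in_submod[OF U u] e1_in_submod[OF W w] by blast
    moreover have "unit_vec 2 1 \<noteq> (0\<^sub>v 2 :: 'k vec)"
    proof
      assume "unit_vec 2 1 = (0\<^sub>v 2 :: 'k vec)"
      then have "unit_vec 2 1 $ 1 = (0\<^sub>v 2 :: 'k vec) $ 1" by simp
      then show False by simp
    qed
    ultimately show False using UW by auto
  qed
  then show ?thesis unfolding indecomposable_def by auto
qed

lemma iso1:
  fixes a b :: "'k::field"
  assumes "mod_iso (1, Dmat 1 (\<lambda>_. a), X) (1, Dmat 1 (\<lambda>_. b), X')"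
  shows "a = b"
proof -
  obtain P where P: "P \<in> carrier_mat 1 1" "invertible_mat P" "P * Dmat 1 (\<lambda>_. a) = Dmat 1 (\<lambda>_. b) * P"
    using assms unfolding mod_iso_def by auto
  obtain B where B: "P * B = 1\<^sub>m 1" "B * P = 1\<^sub>m (dim_row B)"
    using P(2) P(1) unfolding invertible_mat_def inverts_mat_def by auto
  have "dim_row B = dim_col (B * P)" using B(2) by (metis index_one_mat(3))
  then have Bc: "dim_row B = 1" using P(1) by simp
  have "dim_col B = dim_col (P * B)" by simp
  then have Bc2: "dim_col B = 1" using B(1) by simp
  have "(P * B) $$ (0,0) = 1" using B by simp
  then have "P $$ (0,0) * B $$ (0,0) = 1" using P(1) Bc Bc2 by (simp add: scalar_prod_def)
  then have p0: "P $$ (0,0) \<noteq> 0" by auto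
  have "(P * Dmat 1 (\<lambda>_. a)) $$ (0,0) = (Dmat 1 (\<lambda>_. b) * P) $$ (0,0)" using P(3) by simp
  then have "P $$ (0,0) * a = b * P $$ (0,0)" using P(1) by (simp add: Dmat_def scalar_prod_def)
  then show ?thesis using p0 by (simp add: mult.commute)
qed

lemma iso2:
  fixes f g :: "nat \<Rightarrow> 'k::field"
  assumes "mod_iso (2, Dmat 2 f, Xmat2) (2, Dmat 2 g, Xmat2)"
  shows "f 0 = g 0"
proof -
  obtain P where P: "P \<in> carrier_mat 2 2" "invertible_mat P" "P * Dmat 2 f = Dmat 2 g * P"
    "P * Xmat2 = Xmat2 * P"
    using assms unfolding mod_iso_def by auto
  obtain B where B: "P * B = 1\<^sub>m 2" "B * P = 1\<^sub>m (dim_row B)"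
    using P(2) P(1) unfolding invertible_mat_def inverts_mat_def by auto
  have "dim_row B = dim_col (B * P)" using B(2) by (metis index_one_mat(3))
  then have Bc: "dim_row B = 2" using P(1) by simp
  have "dim_col B = dim_col (P * B)" by simp
  then have Bc2: "dim_col B = 2" using B(1) by simp
  have "(P * Xmat2) $$ (0,0) = (Xmat2 * P) $$ (0,0)" using P(4) by simp
  then have p01: "P $$ (0,1) = 0" using P(1) by (simp add: Xmat2_def scalar_prod_def sum2)
  have "(P * B) $$ (0,0) = 1" using B by simp
  then have "P $$ (0,0) * B $$ (0,0) + P $$ (0,1) * B $$ (1,0) = 1" using P(1) Bc Bc2
    by (simp add: scalar_prod_def sum2)
  then have p0: "P $$ (0,0) \<noteq> 0" using p01 by auto
  have "(P * Dmat 2 f) $$ (0,0) = (Dmat 2 g * P) $$ (0,0)" using P(3) by simp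
  then have "P $$ (0,0) * f 0 = g 0 * P $$ (0,0)" using P(1) p01 by (simp add: Dmat_def scalar_prod_def sum2)
  then show ?thesis using p0 by (simp add: mult.commute)
qed


definition is1 :: "idx \<Rightarrow> bool" where
  "is1 j = (case j of S _ \<Rightarrow> True | N0 \<Rightarrow> True | _ \<Rightarrow> False)"

definition valq :: "'k::field \<Rightarrow> idx \<Rightarrow> 'k" where
  "valq q j = (case j of S i \<Rightarrow> q^i | M i \<Rightarrow> q^i | _ \<Rightarrow> 0)"

lemma std_form:
  "std_mod q j = (if is1 j then (1, Dmat 1 (\<lambda>_. valq q j), 0\<^sub>m 1 1)
                  else (2, Dmat 2 (\<lambda>r. valq q j * q^r), Xmat2))"
proof (cases j)
  case (S i) then show ?thesis by (simp add: std_S is1_def valq_def)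
next
  case (M i)
  have "Dmat 2 (\<lambda>r. q^(i+r)) = Dmat 2 (\<lambda>r. q^i * q^r)" by (rule Dmat_cong) (simp add: power_add)
  then show ?thesis using M by (simp add: std_M is1_def valq_def)
next
  case N0 then show ?thesis by (simp add: std_N0 is1_def valq_def)
next
  case N1 then show ?thesis by (simp add: std_N1 is1_def valq_def)
qed

lemma iso_val:
  assumes "mod_iso (std_mod q j) (std_mod q j')"
  shows "is1 j = is1 j' \<and> valq q j = valq q j'"
proof (cases "is1 j"; cases "is1 j'")
  assume "is1 j" "is1 j'"
  then show ?thesis using assms iso1 by (simp add: std_form[of q j] std_form[of q j'])
next
  assume "is1 j" "\<not> is1 j'"
  then show ?thesis using assms by (simp add: std_form[of q j] std_form[of q j'] mod_iso_def)
next
  assume "\<not> is1 j" "is1 j'"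
  then show ?thesis using assms by (simp add: std_form[of q j] std_form[of q j'] mod_iso_def)
next
  assume a: "\<not> is1 j" "\<not> is1 j'"
  then have "mod_iso (2, Dmat 2 (\<lambda>r. valq q j * q^r), Xmat2) (2, Dmat 2 (\<lambda>r. valq q j' * q^r), Xmat2)"
    using assms by (simp add: std_form[of q j] std_form[of q j'])
  from iso2[OF this] a show ?thesis by simp
qed

lemma val_inj:
  fixes q :: "'k::field"
  assumes pr: "primitive_root (2*n) q" and n: "n \<ge> 1"
    and v: "valid_idx n j" "valid_idx n j'" and e: "is1 j = is1 j'" "valq q j = valq q j'"
  shows "j = j'"
proof -
  have N: "2*n > 0" using n by simp
  have q0: "q \<noteq> 0" using pr N unfolding primitive_root_def by (metis power_0_left zero_neq_one neq0_conv)
  show ?thesis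
    using v e pow_inj[OF pr N] q0
    by (cases j; cases j') (auto simp: is1_def valq_def valid_idx_def)
qed

theorem proposition4p1:
  fixes q a :: "'k::field_char_0" and n :: nat
  assumes "alg_closed TYPE('k)"
    and "n \<ge> 1"
    and "primitive_root (2*n) q"
    and "a \<noteq> 0"
  shows "(\<forall>j. valid_idx n j \<longrightarrow> is_wH_mod n q (std_mod q j) \<and> indecomposable (std_mod q j))
       \<and> (\<forall>j j'. valid_idx n j \<and> valid_idx n j' \<and> j \<noteq> j' \<longrightarrow>
              \<not> mod_iso (std_mod q j) (std_mod q j'))
       \<and> (\<forall>Mo :: 'k rep. is_wH_mod n q Mo \<and> indecomposable Mo \<longrightarrow>
              (\<exists>j. valid_idx n j \<and> mod_iso Mo (std_mod q j)))"
proof (intro conjI allI impI)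
  have qN: "q^(2*n) = 1" using assms(3) unfolding primitive_root_def by simp
  fix j assume "valid_idx n j"
  show "is_wH_mod n q (std_mod q j)" by (rule std_wh[OF qN])
  show "indecomposable (std_mod q j)"
  proof (cases "is1 j")
    case True
    show ?thesis unfolding std_form[of q j] by (simp only: True if_True) (rule indec1)
  next
    case False
    show ?thesis unfolding std_form[of q j] by (simp only: False if_False) (rule indec2)
  qed
next
  fix j j' assume a: "valid_idx n j \<and> valid_idx n j' \<and> j \<noteq> j'"
  show "\<not> mod_iso (std_mod q j) (std_mod q j')"
  proof
    assume "mod_iso (std_mod q j) (std_mod q j')"
    from iso_val[OF this] a val_inj[OF assms(3) assms(2)] show False by blast
  qed
next
  fix Mo :: "'k rep" assume a: "is_wH_mod n q Mo \<and> indecomposable Mo"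
  obtain d Z X where Mo: "Mo = (d, Z, X)" by (cases Mo) auto
  show "\<exists>j. valid_idx n j \<and> mod_iso Mo (std_mod q j)"
    unfolding Mo by (rule classify[OF assms(2) assms(3)]) (use a Mo in auto)
qed

end
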